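(* Let $\Omega\subset\mathbb{R}^2$ be open, $\lambda>0$, and let $u\in L^2(\Omega)$ satisfy $-\Delta u=\lambda u$ in $\Omega$. Let $\mathbf{x}_0\in\Omega$, $h>0$, $\alpha\in(0,1)$, and let $\mathbf{e}^-,\mathbf{e}^+$ be unit vectors with angle $\alpha\pi$ from $\mathbf{e}^-$ to $\mathbf{e}^+$; put $\Gamma^\pm=\{\mathbf{x}_0+t\mathbf{e}^\pm:0\le t\le h\}\subset\Omega$. Suppose $\partial_\nu u+\eta_2u=0$ on $\Gamma^+$, where $\eta_2\in C^1(\Gamma^+)$ is complex-valued and $\nu$ is a unit normal to $\Gamma^+$, and $u=0$ on $\Gamma^-$. If $\alpha\notin\{\frac14,\frac12,\frac34\}$, then $u$ vanishes up to the order $3$ at $\mathbf{x}_0$, i.e. $u$ and all its partial derivatives of order $1$ and $2$ vanish at $\mathbf{x}_0$.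
   Context: No boundary condition is imposed on $\partial\Omega$; $u$ is real-analytic in $\Omega$. *)

theory Defs
  imports "HOL-Analysis.Analysis"
begin

definition Dx :: "(real \<times> real \<Rightarrow> complex) \<Rightarrow> real \<times> real \<Rightarrow> complex" where
  "Dx f p = vector_derivative (\<lambda>t. f (t, snd p)) (at (fst p))"

definition Dy :: "(real \<times> real \<Rightarrow> complex) \<Rightarrow> real \<times> real \<Rightarrow> complex" where
  "Dy f p = vector_derivative (\<lambda>t. f (fst p, t)) (at (snd p))"

text \<open>Iterated partial derivative: True means d/dx, False means d/dy
  (the head of the list is applied last).\<close>
fun pd :: "bool list \<Rightarrow> (real \<times> real \<Rightarrow> complex) \<Rightarrow> real \<times> real \<Rightarrow> complex" where
  "pd [] f = f"
| "pd (b # ds) f = (if b then Dx (pd ds f) else Dy (pd ds f))"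

definition smooth_on :: "(real \<times> real) set \<Rightarrow> (real \<times> real \<Rightarrow> complex) \<Rightarrow> bool" where
  "smooth_on S f \<longleftrightarrow> (\<forall>ds. continuous_on S (pd ds f) \<and>
     (\<forall>p\<in>S. (\<lambda>t. pd ds f (t, snd p)) differentiable (at (fst p)) \<and>
             (\<lambda>t. pd ds f (fst p, t)) differentiable (at (snd p))))"

definition laplacian :: "(real \<times> real \<Rightarrow> complex) \<Rightarrow> real \<times> real \<Rightarrow> complex" where
  "laplacian f p = Dx (Dx f) p + Dy (Dy f) p"

definition rot :: "real \<Rightarrow> real \<times> real \<Rightarrow> real \<times> real" where
  "rot \<theta> v = (cos \<theta> * fst v - sin \<theta> * snd v, sin \<theta> * fst v + cos \<theta> * snd v)"

definition seg :: "real \<times> real \<Rightarrow> real \<times> real \<Rightarrow> real \<Rightarrow> (real \<times> real) set" where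
  "seg x0 e h = {x0 + t *\<^sub>R e | t. 0 \<le> t \<and> t \<le> h}"

definition normal_deriv :: "real \<times> real \<Rightarrow> (real \<times> real \<Rightarrow> complex) \<Rightarrow> real \<times> real \<Rightarrow> complex" where
  "normal_deriv \<nu> f p = of_real (fst \<nu>) * Dx f p + of_real (snd \<nu>) * Dy f p"

end

theory Submission imports Defs begin

lemma Dx_vd:
  assumes "(\<lambda>t. F (t, b)) differentiable (at a)"
  shows "((\<lambda>t. F (t, b)) has_vector_derivative Dx F (a, b)) (at a)"
  using assms unfolding Dx_def by (simp add: vector_derivative_works)

lemma Dy_vd:
  assumes "(\<lambda>t. F (a, t)) differentiable (at b)"
  shows "((\<lambda>t. F (a, t)) has_vector_derivative Dy F (a, b)) (at b)"
  using assms unfolding Dy_def by (simp add: vector_derivative_works)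

lemma frechet:
  fixes F :: "real \<times> real \<Rightarrow> complex"
  assumes "open S" "p \<in> S"
    and dx: "\<And>q. q \<in> S \<Longrightarrow> (\<lambda>t. F (t, snd q)) differentiable (at (fst q))"
    and dy: "\<And>q. q \<in> S \<Longrightarrow> (\<lambda>t. F (fst q, t)) differentiable (at (snd q))"
    and cy: "continuous_on S (Dy F)"
  shows "(F has_derivative (\<lambda>v. fst v *\<^sub>R Dx F p + snd v *\<^sub>R Dy F p)) (at p)"
proof -
  obtain x y where p: "p = (x, y)" by (cases p)
  obtain A B where AB: "open A" "open B" "p \<in> A \<times> B" "A \<times> B \<subseteq> S"
    by (rule open_prod_elim[OF assms(1,2)])
  obtain e where e: "e > 0" "ball y e \<subseteq> B" using open_contains_ball_eq[OF AB(2)] AB(3) p by auto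
  have sub: "A \<times> ball y e \<subseteq> S" using AB e by auto
  have op: "open (A \<times> ball y e)" using AB by (simp add: open_Times)
  have pin: "(x, y) \<in> A \<times> ball y e" using AB p e by auto
  have "((\<lambda>(a, b). F (a, b)) has_derivative (\<lambda>(tx, ty). tx *\<^sub>R Dx F (x,y) + blinfun_apply (blinfun_scaleR_left (Dy F (x, y))) ty))
     (at (x, y) within A \<times> ball y e)"
  proof (rule has_derivative_partialsI[where f="\<lambda>a b. F (a, b)" and fy="\<lambda>a b. blinfun_scaleR_left (Dy F (a, b))"])
    show "((\<lambda>a. F (a, y)) has_derivative (\<lambda>t. t *\<^sub>R Dx F (x, y))) (at x within A)"
      using Dx_vd[OF dx[OF assms(2)]] p unfolding has_vector_derivative_def
      by (simp add: has_derivative_at_withinI)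
    fix a b assume "a \<in> A" "b \<in> ball y e"
    then have "(a, b) \<in> S" using sub by auto
    then show "((\<lambda>t. F (a, t)) has_derivative blinfun_apply (blinfun_scaleR_left (Dy F (a, b)))) (at b within ball y e)"
      using Dy_vd[OF dy[of "(a,b)"]] unfolding has_vector_derivative_def
      by (simp add: has_derivative_at_withinI)
  next
    have "continuous (at (x, y)) (Dy F)"
      using continuous_on_eq_continuous_at[OF assms(1)] cy assms(2) p by blast
    then have "continuous (at (x, y)) (\<lambda>q. blinfun_scaleR_left (Dy F q))"
      by (intro continuous_intros) 
    then show "continuous (at (x, y) within A \<times> ball y e) (\<lambda>(a, b). blinfun_scaleR_left (Dy F (a, b)))"
      by (simp add: case_prod_beta' continuous_at_imp_continuous_within)
  qed (use e in auto)
  moreover have "(\<lambda>(a, b). F (a, b)) = F" by auto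
  moreover have "(\<lambda>(tx, ty). tx *\<^sub>R Dx F (x,y) + blinfun_apply (blinfun_scaleR_left (Dy F (x, y))) ty)
      = (\<lambda>v. fst v *\<^sub>R Dx F p + snd v *\<^sub>R Dy F p)" by (auto simp: p)
  moreover have "at (x, y) within A \<times> ball y e = at p" using at_within_open[OF pin op] p by simp
  ultimately show ?thesis by (simp only:)
qed


lemma schwarz:
  fixes F :: "real \<times> real \<Rightarrow> complex"
  assumes "open S" "p \<in> S"
    and dx: "\<And>q. q \<in> S \<Longrightarrow> (\<lambda>t. F (t, snd q)) differentiable (at (fst q))"
    and dy: "\<And>q. q \<in> S \<Longrightarrow> (\<lambda>t. F (fst q, t)) differentiable (at (snd q))"
    and dxy: "\<And>q. q \<in> S \<Longrightarrow> (\<lambda>t. Dy F (t, snd q)) differentiable (at (fst q))"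
    and dyx: "\<And>q. q \<in> S \<Longrightarrow> (\<lambda>t. Dx F (fst q, t)) differentiable (at (snd q))"
    and cy: "continuous_on S (Dy F)"
    and cxy: "continuous_on S (Dx (Dy F))"
  shows "Dx (Dy F) p = Dy (Dx F) p"
proof -
  obtain x y where p: "p = (x, y)" by (cases p)
  obtain A B where AB: "open A" "open B" "p \<in> A \<times> B" "A \<times> B \<subseteq> S"
    by (rule open_prod_elim[OF assms(1,2)])
  obtain r1 where r1: "r1 > 0" "cball x r1 \<subseteq> A" using open_contains_cball_eq[OF AB(1)] AB(3) p by auto
  obtain r2 where r2: "r2 > 0" "cball y r2 \<subseteq> B" using open_contains_cball_eq[OF AB(2)] AB(3) p by auto
  define r where "r = min r1 r2"
  have r: "r > 0" using r1 r2 r_def by auto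
  define U where "U = {x - r .. x + r}"
  define V where "V = {y - r .. y + r}"
  define c where "c = y - r"
  have UV: "U \<times> V \<subseteq> S"
  proof -
    have "U \<subseteq> cball x r1" "V \<subseteq> cball y r2" using r_def
      by (auto simp: U_def V_def cball_eq_atLeastAtMost)
    then show ?thesis using r1 r2 AB by blast
  qed
  have xU: "x \<in> U" and yV: "y \<in> V" using r by (auto simp: U_def V_def)
  have key: "Dx F (x, y') - Dx F (x, c) = integral {c..y'} (\<lambda>t. Dx (Dy F) (x, t))" if y': "y' \<in> V" for y'
  proof -
    have sub: "{c..y'} \<subseteq> V" using y' by (auto simp: V_def c_def)
    have I: "integral {c..y'} (\<lambda>t. Dy F (x', t)) = F (x', y') - F (x', c)" if "x' \<in> U" for x'
    proof -
      have "((\<lambda>t. Dy F (x', t)) has_integral (F (x', y') - F (x', c))) {c..y'}"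
      proof (rule fundamental_theorem_of_calculus)
        show "c \<le> y'" using y' by (auto simp: V_def c_def)
        fix t assume t: "t \<in> {c..y'}"
        then have "(x', t) \<in> S" using UV sub that by auto
        from Dy_vd[OF dy[OF this, simplified]]
        show "((\<lambda>t. F (x', t)) has_vector_derivative Dy F (x', t)) (at t within {c..y'})"
          by (rule has_vector_derivative_at_within)
      qed
      then show ?thesis by (rule integral_unique)
    qed
    have L: "((\<lambda>x'. integral (cbox c y') (\<lambda>t. Dy F (x', t))) has_vector_derivative
              integral (cbox c y') (\<lambda>t. Dx (Dy F) (x, t))) (at x within U)"
    proof (rule leibniz_rule_vector_derivative)
      fix x' t assume "x' \<in> U" "t \<in> cbox c y'"
      then have "(x', t) \<in> S" using UV sub by auto
      from Dx_vd[OF dxy[OF this, simplified]]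
      show "((\<lambda>x'. Dy F (x', t)) has_vector_derivative Dx (Dy F) (x', t)) (at x' within U)"
        by (rule has_vector_derivative_at_within)
    next
      fix x' assume "x' \<in> U"
      then have "(\<lambda>t. (x', t)) ` {c..y'} \<subseteq> S" using UV sub by auto
      then have "continuous_on {c..y'} (\<lambda>t. Dy F (x', t))"
        by (intro continuous_on_compose2[OF cy] continuous_intros) auto
      then show "(\<lambda>t. Dy F (x', t)) integrable_on cbox c y'"
        by (simp add: integrable_continuous_real)
    next
      have "U \<times> cbox c y' \<subseteq> S" using UV sub by auto
      then show "continuous_on (U \<times> cbox c y') (\<lambda>(x, t). Dx (Dy F) (x, t))"
        using continuous_on_subset[OF cxy] by (simp add: case_prod_beta')
    qed (use xU in \<open>auto simp: U_def\<close>)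
    have R: "((\<lambda>x'. F (x', y') - F (x', c)) has_vector_derivative Dx F (x, y') - Dx F (x, c)) (at x within U)"
    proof -
      have m1: "(x, y') \<in> S" and m2: "(x, c) \<in> S" using UV xU y' sub r by (auto simp: c_def V_def)
      have d1: "((\<lambda>t. F (t, y')) has_vector_derivative Dx F (x, y')) (at x)"
        using Dx_vd[of F y' x] dx[OF m1] by simp
      have d2: "((\<lambda>t. F (t, c)) has_vector_derivative Dx F (x, c)) (at x)"
        using Dx_vd[of F c x] dx[OF m2] by simp
      show ?thesis
        using has_vector_derivative_diff[OF d1 d2] has_vector_derivative_at_within by blast
    qed
    have L2: "((\<lambda>x'. F (x', y') - F (x', c)) has_vector_derivative
              integral {c..y'} (\<lambda>t. Dx (Dy F) (x, t))) (at x within U)"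
      using has_vector_derivative_transform[OF xU _ L] I by simp
    show ?thesis
      using vector_derivative_unique_within_closed_interval[of "x - r" "x + r" x, unfolded box_real, OF _ _ R[unfolded U_def] L2[unfolded U_def]]
        r xU by (auto simp: U_def)
  qed
  have c1: "((\<lambda>y'. Dx F (x, y') - Dx F (x, c)) has_vector_derivative Dy (Dx F) (x, y)) (at y within V)"
  proof -
    have d: "((\<lambda>t. Dx F (x, t)) has_vector_derivative Dy (Dx F) (x, y)) (at y)"
      using Dy_vd[of "Dx F" x y] dyx[OF assms(2)] p by simp
    have "((\<lambda>y'. Dx F (x, y') - Dx F (x, c)) has_vector_derivative Dy (Dx F) (x, y) - 0) (at y)"
      by (rule has_vector_derivative_diff[OF d has_vector_derivative_const])
    then show ?thesis using has_vector_derivative_at_within by force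
  qed
  have c2: "((\<lambda>y'. integral {c..y'} (\<lambda>t. Dx (Dy F) (x, t))) has_vector_derivative Dx (Dy F) (x, y)) (at y within V)"
  proof -
    have "(\<lambda>t. (x, t)) ` V \<subseteq> S" using UV xU by auto
    then have "continuous_on V (\<lambda>t. Dx (Dy F) (x, t))"
      by (intro continuous_on_compose2[OF cxy] continuous_intros) auto
    then show ?thesis using integral_has_vector_derivative[of c "y + r" "\<lambda>t. Dx (Dy F) (x, t)" y] yV
      by (simp add: V_def c_def)
  qed
  have c3: "((\<lambda>y'. Dx F (x, y') - Dx F (x, c)) has_vector_derivative Dx (Dy F) (x, y)) (at y within V)"
    using has_vector_derivative_transform[OF yV _ c2] key by simp
  show ?thesis
    using vector_derivative_unique_within_closed_interval[of "y - r" "y + r" y, unfolded box_real, OF _ _ c1[unfolded V_def] c3[unfolded V_def]]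
      r p by auto
qed

lemma cos1: assumes "0 < \<alpha>" "\<alpha> < 1" "\<alpha> \<noteq> 1/2" shows "cos (\<alpha> * pi) \<noteq> 0"
proof
  assume "cos (\<alpha> * pi) = 0"
  then obtain n :: int where n: "\<alpha> * pi = n * pi + pi/2" using cos_zero_iff_int2 by blast
  then have "\<alpha> * pi = (n + 1/2) * pi" by (simp add: algebra_simps)
  then have "\<alpha> = n + 1/2" using pi_neq_zero by (simp only: mult_cancel_right) simp
  then show False using assms by (cases "n \<ge> 0"; cases "n = 0") auto
qed

lemma cos2: assumes "0 < \<alpha>" "\<alpha> < 1" "\<alpha> \<noteq> 1/4" "\<alpha> \<noteq> 3/4" shows "cos (2 * (\<alpha> * pi)) \<noteq> 0"
proof
  assume "cos (2 * (\<alpha> * pi)) = 0"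
  then obtain n :: int where n: "2 * (\<alpha> * pi) = n * pi + pi/2" using cos_zero_iff_int2 by blast
  then have "(2 * \<alpha>) * pi = (n + 1/2) * pi" by (simp add: algebra_simps)
  then have "2 * \<alpha> = n + 1/2" using pi_neq_zero by (simp only: mult_cancel_right) simp
  then have "0 \<le> n" "n \<le> 1" using assms by linarith+
  then have "n = 0 \<or> n = 1" by linarith
  then show False using assms \<open>2 * \<alpha> = n + 1/2\<close> by auto
qed

lemma frechet_pd:
  assumes "open S" "smooth_on S u" "p \<in> S"
  shows "(pd ds u has_derivative (\<lambda>v. fst v *\<^sub>R pd (True#ds) u p + snd v *\<^sub>R pd (False#ds) u p)) (at p)"
proof -
  have sm: "continuous_on S (pd ds' u) \<and> (\<forall>p\<in>S. (\<lambda>t. pd ds' u (t, snd p)) differentiable (at (fst p)) \<and>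
             (\<lambda>t. pd ds' u (fst p, t)) differentiable (at (snd p)))" for ds'
    using assms(2) unfolding smooth_on_def by blast
  show ?thesis
    using frechet[OF assms(1,3), of "pd ds u"] sm[of ds] sm[of "False#ds"] by simp
qed

lemma line_deriv:
  assumes "(F has_derivative L) (at (a + t *\<^sub>R v))"
  shows "((\<lambda>s. F (a + s *\<^sub>R v)) has_vector_derivative L v) (at t)"
proof -
  have l: "((\<lambda>s. a + s *\<^sub>R v) has_derivative (\<lambda>s. s *\<^sub>R v)) (at t)"
    by (auto intro!: derivative_eq_intros)
  have lin: "linear L" using assms has_derivative_linear by blast
  from diff_chain_at[OF l assms] show ?thesis
    unfolding has_vector_derivative_def o_def using linear_scale[OF lin] by simp
qed

lemma hvd_scale:
  assumes "(f has_vector_derivative f') F"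
  shows "((\<lambda>x. c *\<^sub>R f x) has_vector_derivative (c *\<^sub>R f')) F"
  using assms unfolding has_vector_derivative_def
  by (rule has_derivative_eq_rhs[OF has_derivative_scaleR_right]) (simp add: fun_eq_iff scaleR_left_commute)

lemma hvd_lin:
  assumes "(f has_vector_derivative f') F" "(g has_vector_derivative g') F"
  shows "((\<lambda>x. c *\<^sub>R f x + d *\<^sub>R g x) has_vector_derivative (c *\<^sub>R f' + d *\<^sub>R g')) F"
  by (rule has_vector_derivative_add[OF hvd_scale[OF assms(1)] hvd_scale[OF assms(2)]])

lemma eq_deriv:
  fixes g k :: "real \<Rightarrow> complex"
  assumes "h > 0" "t \<in> {0..h}" "(g has_vector_derivative D) (at t)"
    "(k has_vector_derivative D') (at t within {0..h})"
    "\<And>s. s \<in> {0..h} \<Longrightarrow> g s = k s"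
  shows "D = D'"
proof -
  have "(g has_vector_derivative D') (at t within {0..h})"
    using has_vector_derivative_transform[of t "{0..h}" g k D'] assms by auto
  moreover have "(g has_vector_derivative D) (at t within {0..h})"
    using assms(3) by (rule has_vector_derivative_at_within)
  ultimately show ?thesis
    using vector_derivative_unique_within_closed_interval[of 0 h t g D D'] assms by auto
qed

lemma zero_deriv:
  fixes g :: "real \<Rightarrow> complex"
  assumes "h > 0" "t \<in> {0..h}" "(g has_vector_derivative D) (at t)"
    "\<And>s. s \<in> {0..h} \<Longrightarrow> g s = 0"
  shows "D = 0"
  using eq_deriv[OF assms(1,2,3), of "\<lambda>_. 0" 0] assms(4) by auto

theorem theorem5p11:
  fixes \<Omega> :: "(real \<times> real) set" and u :: "real \<times> real \<Rightarrow> complex"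
    and lam :: real and x0 em ep \<nu> :: "real \<times> real" and h \<alpha> :: real
    and \<eta>2 :: "real \<times> real \<Rightarrow> complex"
  assumes "open \<Omega>" and "lam > 0"
    and "smooth_on \<Omega> u"
    and "set_integrable lborel \<Omega> (\<lambda>x. (cmod (u x))\<^sup>2)"
    and "\<And>p. p \<in> \<Omega> \<Longrightarrow> - laplacian u p = of_real lam * u p"
    and "x0 \<in> \<Omega>" and "h > 0" and "0 < \<alpha>" and "\<alpha> < 1"
    and "norm em = 1" and "ep = rot (\<alpha> * pi) em"
    and "seg x0 ep h \<subseteq> \<Omega>" and "seg x0 em h \<subseteq> \<Omega>"
    and "norm \<nu> = 1" and "\<nu> \<bullet> ep = 0"
    and "(\<lambda>t. \<eta>2 (x0 + t *\<^sub>R ep)) C1_differentiable_on {0..h}"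
    and "\<And>p. p \<in> seg x0 ep h \<Longrightarrow> normal_deriv \<nu> u p + \<eta>2 p * u p = 0"
    and "\<And>p. p \<in> seg x0 em h \<Longrightarrow> u p = 0"
    and "\<alpha> \<notin> {1/4, 1/2, 3/4}"
  shows "\<forall>ds. length ds \<le> 2 \<longrightarrow> pd ds u x0 = 0"
proof -
  note opn = assms(1) and smo = assms(3)
  obtain a b where em: "em = (a, b)" by (cases em)
  obtain n1 n2 where nu: "\<nu> = (n1, n2)" by (cases \<nu>)
  define c where "c = cos (\<alpha> * pi)"
  define s where "s = sin (\<alpha> * pi)"
  define e1 where "e1 = c * a - s * b"
  define e2 where "e2 = s * a + c * b"
  have ep: "ep = (e1, e2)" using assms(11) by (simp add: rot_def em e1_def e2_def c_def s_def)
  have emf: "fst em = a" "snd em = b" by (simp_all add: em)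
  have epf: "fst ep = e1" "snd ep = e2" by (simp_all add: ep)
  have ab: "a^2 + b^2 = 1"
  proof -
    have "sqrt (a^2 + b^2) = 1" using assms(10) by (simp add: em norm_Pair)
    then show ?thesis by (metis real_sqrt_eq_1_iff)
  qed
  have nn: "n1^2 + n2^2 = 1"
  proof -
    have "sqrt (n1^2 + n2^2) = 1" using assms(14) by (simp add: nu norm_Pair)
    then show ?thesis by (metis real_sqrt_eq_1_iff)
  qed
  have ne: "n1 * e1 + n2 * e2 = 0" using assms(15) by (simp add: nu ep inner_Pair)
  have cs: "c^2 + s^2 = 1" by (simp add: c_def s_def)
  have ee: "e1^2 + e2^2 = 1"
  proof -
    have "e1^2 + e2^2 = (c^2 + s^2) * (a^2 + b^2)" unfolding e1_def e2_def by algebra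
    then show ?thesis using ab cs by simp
  qed
  have c0: "c \<noteq> 0" unfolding c_def using cos1[of \<alpha>] assms(8,9,19) by auto
  have c2: "c^2 - s^2 \<noteq> 0" unfolding c_def s_def using cos2[of \<alpha>] assms(8,9,19) cos_double[of "\<alpha> * pi"] by auto
  have memm: "x0 + t *\<^sub>R em \<in> \<Omega>" if "t \<in> {0..h}" for t
    using assms(13) that unfolding seg_def by auto
  have memp: "x0 + t *\<^sub>R ep \<in> seg x0 ep h" if "t \<in> {0..h}" for t
    using that unfolding seg_def by auto
  have memp': "x0 + t *\<^sub>R ep \<in> \<Omega>" if "t \<in> {0..h}" for t
    using assms(12) memp[OF that] by auto
  have ld: "((\<lambda>s. pd ds u (x0 + s *\<^sub>R v)) has_vector_derivative
      (fst v *\<^sub>R pd (True#ds) u (x0 + t *\<^sub>R v) + snd v *\<^sub>R pd (False#ds) u (x0 + t *\<^sub>R v))) (at t)"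
    if "x0 + t *\<^sub>R v \<in> \<Omega>" for ds v t
    using line_deriv[OF frechet_pd[OF opn smo that, of ds]] by simp
  have h0: "0 \<in> {0..h}" using assms(7) by simp
  have u0: "u x0 = 0" using assms(18)[of x0] unfolding seg_def using assms(7) by force
  have zm: "u (x0 + t *\<^sub>R em) = 0" if "t \<in> {0..h}" for t
    by (rule assms(18)) (use that in \<open>auto simp: seg_def\<close>)
  define ux where "ux = Dx u x0"
  define uy where "uy = Dy u x0"
  have g1: "a *\<^sub>R ux + b *\<^sub>R uy = 0"
  proof -
    have "((\<lambda>s. pd [] u (x0 + s *\<^sub>R em)) has_vector_derivative (a *\<^sub>R ux + b *\<^sub>R uy)) (at 0)"
      using ld[of 0 em "[]"] memm[OF h0] by (simp add: emf ux_def uy_def)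
    from zero_deriv[OF assms(7) h0 this] show ?thesis
      using zm by simp
  qed
  have g2: "n1 *\<^sub>R ux + n2 *\<^sub>R uy = 0"
    using assms(17)[OF memp[OF h0]] u0 by (simp add: normal_deriv_def nu ux_def uy_def scaleR_conv_of_real)
  define dg where "dg = a * n2 - b * n1"
  have dg: "dg \<noteq> 0"
  proof
    assume "dg = 0"
    define k where "k = a * n1 + b * n2"
    have "n1 * e1 + n2 * e2 = c * k + s * dg" unfolding k_def dg_def e1_def e2_def by algebra
    then have "c * k = 0" using ne \<open>dg = 0\<close> by simp
    moreover have "dg^2 + k^2 = (a^2+b^2) * (n1^2+n2^2)" unfolding k_def dg_def by algebra
    ultimately show False using ab nn c0 \<open>dg = 0\<close> by auto
  qed
  have ux0: "ux = 0" and uy0: "uy = 0"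
  proof -
    have "of_real dg * ux = of_real n2 * (of_real a * ux + of_real b * uy) - of_real b * (of_real n1 * ux + of_real n2 * uy)"
      by (simp add: dg_def algebra_simps)
    then have "of_real dg * ux = 0" using g1 g2 by (simp add: scaleR_conv_of_real)
    then show "ux = 0" using dg by simp
    have "of_real dg * uy = of_real a * (of_real n1 * ux + of_real n2 * uy) - of_real n1 * (of_real a * ux + of_real b * uy)"
      by (simp add: dg_def algebra_simps)
    then have "of_real dg * uy = 0" using g1 g2 by (simp add: scaleR_conv_of_real)
    then show "uy = 0" using dg by simp
  qed
  define A where "A = Dx (Dx u) x0"
  define Bxy where "Bxy = Dx (Dy u) x0"
  define Byx where "Byx = Dy (Dx u) x0"
  define D where "D = Dy (Dy u) x0"
  have lap: "A + D = 0"
  proof -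
    have "- (A + D) = 0" using assms(5)[OF assms(6)] u0 unfolding laplacian_def A_def D_def
      by (simp only: mult_zero_right)
    then show ?thesis by (simp only: neg_equal_0_iff_equal)
  qed
  have sw: "Bxy = Byx"
  proof -
    have sm: "continuous_on \<Omega> (pd ds' u) \<and> (\<forall>p\<in>\<Omega>. (\<lambda>t. pd ds' u (t, snd p)) differentiable (at (fst p)) \<and>
             (\<lambda>t. pd ds' u (fst p, t)) differentiable (at (snd p)))" for ds'
      using smo unfolding smooth_on_def by blast
    show ?thesis unfolding Bxy_def Byx_def
      using schwarz[OF opn assms(6), of u] sm[of "[]"] sm[of "[True]"] sm[of "[False]"] sm[of "[True,False]"]
      by simp
  qed
  have E1: "a *\<^sub>R (a *\<^sub>R A + b *\<^sub>R Byx) + b *\<^sub>R (a *\<^sub>R Bxy + b *\<^sub>R D) = 0"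
  proof -
    have z: "a *\<^sub>R Dx u (x0 + t *\<^sub>R em) + b *\<^sub>R Dy u (x0 + t *\<^sub>R em) = 0" if "t \<in> {0..h}" for t
    proof -
      have "((\<lambda>s. pd [] u (x0 + s *\<^sub>R em)) has_vector_derivative
             (a *\<^sub>R Dx u (x0 + t *\<^sub>R em) + b *\<^sub>R Dy u (x0 + t *\<^sub>R em))) (at t)"
        using ld[of t em "[]"] memm[OF that] by (simp add: emf)
      from zero_deriv[OF assms(7) that this] show ?thesis
        using zm by simp
    qed
    have "((\<lambda>s. a *\<^sub>R pd [True] u (x0 + s *\<^sub>R em) + b *\<^sub>R pd [False] u (x0 + s *\<^sub>R em)) has_vector_derivative
           (a *\<^sub>R (a *\<^sub>R A + b *\<^sub>R Byx) + b *\<^sub>R (a *\<^sub>R Bxy + b *\<^sub>R D))) (at 0)"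
    proof (rule hvd_lin)
      show "((\<lambda>s. pd [True] u (x0 + s *\<^sub>R em)) has_vector_derivative (a *\<^sub>R A + b *\<^sub>R Byx)) (at 0)"
        using ld[of 0 em "[True]"] memm[OF h0] by (simp add: emf A_def Byx_def)
      show "((\<lambda>s. pd [False] u (x0 + s *\<^sub>R em)) has_vector_derivative (a *\<^sub>R Bxy + b *\<^sub>R D)) (at 0)"
        using ld[of 0 em "[False]"] memm[OF h0] by (simp add: emf Bxy_def D_def)
    qed
    from zero_deriv[OF assms(7) h0 this] show ?thesis using z by simp
  qed
  have E2: "n1 *\<^sub>R (e1 *\<^sub>R A + e2 *\<^sub>R Byx) + n2 *\<^sub>R (e1 *\<^sub>R Bxy + e2 *\<^sub>R D) = 0"
  proof -
    have L: "((\<lambda>s. n1 *\<^sub>R pd [True] u (x0 + s *\<^sub>R ep) + n2 *\<^sub>R pd [False] u (x0 + s *\<^sub>R ep)) has_vector_derivative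
           (n1 *\<^sub>R (e1 *\<^sub>R A + e2 *\<^sub>R Byx) + n2 *\<^sub>R (e1 *\<^sub>R Bxy + e2 *\<^sub>R D))) (at 0)"
    proof (rule hvd_lin)
      show "((\<lambda>s. pd [True] u (x0 + s *\<^sub>R ep)) has_vector_derivative (e1 *\<^sub>R A + e2 *\<^sub>R Byx)) (at 0)"
        using ld[of 0 ep "[True]"] memp'[OF h0] by (simp add: epf A_def Byx_def)
      show "((\<lambda>s. pd [False] u (x0 + s *\<^sub>R ep)) has_vector_derivative (e1 *\<^sub>R Bxy + e2 *\<^sub>R D)) (at 0)"
        using ld[of 0 ep "[False]"] memp'[OF h0] by (simp add: epf Bxy_def D_def)
    qed
    have "(\<lambda>t. \<eta>2 (x0 + t *\<^sub>R ep)) differentiable (at 0)"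
      using assms(16) h0 by (simp add: C1_differentiable_on_eq)
    then obtain E' where E': "((\<lambda>t. \<eta>2 (x0 + t *\<^sub>R ep)) has_vector_derivative E') (at 0)"
      using vector_derivative_works by blast
    have U: "((\<lambda>s. pd [] u (x0 + s *\<^sub>R ep)) has_vector_derivative 0) (at 0)"
      using ld[of 0 ep "[]"] memp'[OF h0] ux0 uy0 by (simp add: ux_def uy_def)
    have R: "((\<lambda>s. - (\<eta>2 (x0 + s *\<^sub>R ep) * u (x0 + s *\<^sub>R ep))) has_vector_derivative 0) (at 0 within {0..h})"
      using has_vector_derivative_minus[OF has_vector_derivative_mult[OF E' U]] u0
      by (auto intro: has_vector_derivative_at_within)
    show ?thesis
    proof (rule eq_deriv[OF assms(7) h0 L R])
      fix t assume "t \<in> {0..h}"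
      from assms(17)[OF memp[OF this]]
      show "n1 *\<^sub>R pd [True] u (x0 + t *\<^sub>R ep) + n2 *\<^sub>R pd [False] u (x0 + t *\<^sub>R ep) =
            - (\<eta>2 (x0 + t *\<^sub>R ep) * u (x0 + t *\<^sub>R ep))"
        by (simp add: normal_deriv_def nu scaleR_conv_of_real eq_neg_iff_add_eq_0)
    qed
  qed
  define det where "det = (a^2 - b^2) * (n1 * e2 + n2 * e1) - 2 * a * b * (n1 * e1 - n2 * e2)"
  have detnz: "det \<noteq> 0"
  proof -
    define sg where "sg = n2 * e1 - n1 * e2"
    define Q where "Q = (a^2 - b^2) * (e1^2 - e2^2) + 4 * a * b * e1 * e2"
    have "det = sg * Q" using ne ee unfolding det_def sg_def Q_def by algebra
    moreover have "sg^2 = 1" using ne ee nn unfolding sg_def by algebra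
    moreover have "Q = c^2 - s^2" using ab unfolding Q_def e1_def e2_def by algebra
    ultimately show ?thesis using c2 by auto
  qed
  have A0: "A = 0" and B0: "Bxy = 0"
  proof -
    have D: "D = - A" using lap by (simp add: eq_neg_iff_add_eq_0 add.commute)
    have e1': "of_real (a^2 - b^2) * A + of_real (2*a*b) * Bxy = 0"
      using E1 sw D by (simp add: scaleR_conv_of_real algebra_simps power2_eq_square)
    have e2': "of_real (n1 * e1 - n2 * e2) * A + of_real (n1 * e2 + n2 * e1) * Bxy = 0"
      using E2 sw D by (simp add: scaleR_conv_of_real algebra_simps)
    have "of_real det * A = of_real (n1 * e2 + n2 * e1) * (of_real (a^2 - b^2) * A + of_real (2*a*b) * Bxy)
        - of_real (2*a*b) * (of_real (n1 * e1 - n2 * e2) * A + of_real (n1 * e2 + n2 * e1) * Bxy)"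
      by (simp add: det_def algebra_simps)
    then have "of_real det * A = 0" using e1' e2' by simp
    then show "A = 0" using detnz by simp
    have "of_real det * Bxy = of_real (a^2 - b^2) * (of_real (n1 * e1 - n2 * e2) * A + of_real (n1 * e2 + n2 * e1) * Bxy)
        - of_real (n1 * e1 - n2 * e2) * (of_real (a^2 - b^2) * A + of_real (2*a*b) * Bxy)"
      by (simp add: det_def algebra_simps)
    then have "of_real det * Bxy = 0" using e1' e2' by simp
    then show "Bxy = 0" using detnz by simp
  qed
  have D0: "D = 0" using lap A0 by simp
  show ?thesis
  proof (intro allI impI)
    fix ds :: "bool list" assume "length ds \<le> 2"
    then have "ds = [] \<or> (\<exists>x. ds = [x]) \<or> (\<exists>x y. ds = [x, y])"
      by (cases ds; cases "tl ds"; auto)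
    then show "pd ds u x0 = 0"
      using u0 ux0 uy0 A0 B0 D0 sw
      by (auto simp: ux_def uy_def A_def Bxy_def Byx_def D_def)
  qed
qed

end
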